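(* Let $\mathcal{F}$ be a finite family of pairwise intersecting compact convex sets in the plane with the $(4,3)$ property, i.e., among any four distinct members some three have a common point. For $D\in\mathcal{F}$, let $G_D$ be the directed graph on vertex set $\mathcal{F}\setminus\{D\}$ with an arc from $A$ to $B$ if and only if $o(ABD)=1$. Then $G_D$ contains no directed cycle of length 4.
   Context: For three pairwise intersecting compact convex sets $X,Y,Z$ in the plane: $o(XYZ)=0$ if $X\cap Y\cap Z\neq\emptyset$; otherwise $o(XYZ)=o(xyz)$ for any $x\in Y\cap Z$, $y\in X\cap Z$, $z\in X\cap Y$, where for points $o(xyz)=+1$ for a counterclockwise and $-1$ for a clockwise triangle (independent of the choice). *)

theory Defs
  imports "HOL-Analysis.Analysis"
begin

definition orient_pt :: "real^2 \<Rightarrow> real^2 \<Rightarrow> real^2 \<Rightarrow> int" where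
  "orient_pt x y z =
     (let d = (y$1 - x$1) * (z$2 - x$2) - (y$2 - x$2) * (z$1 - x$1)
      in if d > 0 then 1 else if d < 0 then -1 else 0)"

text \<open>Orientation o(XYZ) of three (pairwise intersecting) sets, as in the paper:
  0 if the three have a common point, otherwise the orientation of
  x \<in> Y\<inter>Z, y \<in> X\<inter>Z, z \<in> X\<inter>Y (chosen arbitrarily; the paper notes independence
  of the choice).\<close>
definition orient_set :: "(real^2) set \<Rightarrow> (real^2) set \<Rightarrow> (real^2) set \<Rightarrow> int" where
  "orient_set X Y Z =
     (if X \<inter> Y \<inter> Z \<noteq> {} then 0
      else orient_pt (SOME x. x \<in> Y \<inter> Z) (SOME y. y \<in> X \<inter> Z) (SOME z. z \<in> X \<inter> Y))"

definition arc_G :: "(real^2) set set \<Rightarrow> (real^2) set \<Rightarrow> (real^2) set \<Rightarrow> (real^2) set \<Rightarrow> bool" where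
  "arc_G F D A B \<longleftrightarrow> A \<in> F - {D} \<and> B \<in> F - {D} \<and> orient_set A B D = 1"

end

theory Submission imports Defs begin

definition dt :: "real^2 \<Rightarrow> real^2 \<Rightarrow> real^2 \<Rightarrow> real" where
 "dt x y z = (y$1 - x$1) * (z$2 - x$2) - (y$2 - x$2) * (z$1 - x$1)"

lemma orient_pt_dt: "orient_pt x y z = (if dt x y z > 0 then 1 else if dt x y z < 0 then -1 else 0)"
  unfolding orient_pt_def dt_def Let_def by simp

lemma dt_cyc: "dt y z x = dt x y z" unfolding dt_def by (simp add: algebra_simps)
lemma dt_swap: "dt y x z = - dt x y z" unfolding dt_def by (simp add: algebra_simps)

lemma dt_collinear:
  assumes "dt x y z = 0" shows "collinear {x,y,z}"
proof (cases "x = z")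
  case True then show ?thesis by (simp add: collinear_3_expand)
next
  case False
  then have i: "x$1 \<noteq> z$1 \<or> x$2 \<noteq> z$2" by (auto simp: vec_eq_iff forall_2)
  have "\<exists>u. y = u *\<^sub>R x + (1 - u) *\<^sub>R z"
  proof (cases "x$1 = z$1")
    case False
    define u where "u = (y$1 - z$1) / (x$1 - z$1)"
    have key: "(y$2 - z$2)*(x$1 - z$1) = (y$1 - z$1)*(x$2 - z$2)"
      using assms unfolding dt_def by (simp add: algebra_simps)
    have "u * (x$2 - z$2) = y$2 - z$2"
      unfolding u_def using False key by (simp add: divide_simps)
    then have e2: "y$2 = u * x$2 + (1-u) * z$2" by (simp add: algebra_simps)
    have "u * (x$1 - z$1) = y$1 - z$1" using False unfolding u_def by simp
    then have e1: "y$1 = u * x$1 + (1-u) * z$1" by (simp add: algebra_simps)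
    show ?thesis by (rule exI[of _ u]) (simp add: vec_eq_iff forall_2 e1 e2)
  next
    case True
    then have F: "x$2 \<noteq> z$2" using i by simp
    define u where "u = (y$2 - z$2) / (x$2 - z$2)"
    have key: "(y$2 - z$2)*(x$1 - z$1) = (y$1 - z$1)*(x$2 - z$2)"
      using assms unfolding dt_def by (simp add: algebra_simps)
    have "u * (x$1 - z$1) = y$1 - z$1"
      unfolding u_def using F key by (simp add: divide_simps)
    then have e1: "y$1 = u * x$1 + (1-u) * z$1" by (simp add: algebra_simps)
    have "u * (x$2 - z$2) = y$2 - z$2" using F unfolding u_def by simp
    then have e2: "y$2 = u * x$2 + (1-u) * z$2" by (simp add: algebra_simps)
    show ?thesis by (rule exI[of _ u]) (simp add: vec_eq_iff forall_2 e1 e2)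
  qed
  then show ?thesis by (simp add: collinear_3_expand)
qed

lemma dt_nz:
  assumes "convex X" "convex Y" "convex Z" "X \<inter> Y \<inter> Z = {}"
    "x \<in> Y \<inter> Z" "y \<in> X \<inter> Z" "z \<in> X \<inter> Y"
  shows "dt x y z \<noteq> 0"
proof
  assume "dt x y z = 0"
  then have "collinear {x,y,z}" by (rule dt_collinear)
  then have "x \<in> closed_segment y z \<or> y \<in> closed_segment z x \<or> z \<in> closed_segment x y"
    by (simp add: collinear_between_cases between_mem_segment)
  moreover have "closed_segment y z \<subseteq> X" "closed_segment z x \<subseteq> Y" "closed_segment x y \<subseteq> Z"
    using assms closed_segment_subset[of y X z] closed_segment_subset[of z Y x]
      closed_segment_subset[of x Z y] by auto
  ultimately show False using assms by blast
qed

lemma dt_affine: "dt ((1-s) *\<^sub>R x + s *\<^sub>R x') y z = (1-s) * dt x y z + s * dt x' y z"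
  unfolding dt_def by (simp add: algebra_simps)

lemma dt_first_same:
  assumes "convex X" "convex Y" "convex Z" "X \<inter> Y \<inter> Z = {}"
    "x \<in> Y \<inter> Z" "x' \<in> Y \<inter> Z" "y \<in> X \<inter> Z" "z \<in> X \<inter> Y"
  shows "dt x y z > 0 \<longleftrightarrow> dt x' y z > 0"
proof (rule ccontr)
  define a where "a = dt x y z"
  define b where "b = dt x' y z"
  assume "\<not> ?thesis"
  moreover have "a \<noteq> 0" "b \<noteq> 0" unfolding a_def b_def using dt_nz assms by blast+
  ultimately have ab: "(a > 0 \<and> b < 0) \<or> (a < 0 \<and> b > 0)" unfolding a_def b_def by linarith
  define s where "s = a / (a - b)"
  have s01: "0 \<le> s" "s \<le> 1" using ab unfolding s_def by (auto simp: divide_simps)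
  define w where "w = (1-s) *\<^sub>R x + s *\<^sub>R x'"
  have "w \<in> Y" unfolding w_def using assms(5,6) s01 convexD[OF assms(2), of x x' "1-s" s] by auto
  moreover have "w \<in> Z" unfolding w_def using assms(5,6) s01 convexD[OF assms(3), of x x' "1-s" s] by auto
  ultimately have "dt w y z \<noteq> 0" using dt_nz[OF assms(1-4), of w y z] assms(7,8) by blast
  moreover have "s * (a - b) = a" using ab unfolding s_def by auto
  then have "(1-s) * a + s * b = 0" by (simp add: algebra_simps)
  then have "dt w y z = 0" unfolding w_def dt_affine a_def[symmetric] b_def[symmetric] .
  ultimately show False by simp
qed

lemma dt_same:
  assumes "convex X" "convex Y" "convex Z" "X \<inter> Y \<inter> Z = {}"
    "x \<in> Y \<inter> Z" "y \<in> X \<inter> Z" "z \<in> X \<inter> Y"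
    "x' \<in> Y \<inter> Z" "y' \<in> X \<inter> Z" "z' \<in> X \<inter> Y"
  shows "dt x y z > 0 \<longleftrightarrow> dt x' y' z' > 0"
proof -
  have "dt x y z > 0 \<longleftrightarrow> dt x' y z > 0" by (rule dt_first_same[of X Y Z]) (use assms in auto)
  also have "dt x' y z = dt y z x'" by (simp add: dt_cyc)
  also have "dt y z x' > 0 \<longleftrightarrow> dt y' z x' > 0"
    by (rule dt_first_same[of Y Z X]) (use assms in auto)
  also have "dt y' z x' = dt z x' y'" by (simp add: dt_cyc)
  also have "dt z x' y' > 0 \<longleftrightarrow> dt z' x' y' > 0"
    by (rule dt_first_same[of Z X Y]) (use assms in auto)
  also have "dt z' x' y' = dt x' y' z'" by (simp add: dt_cyc)
  finally show ?thesis .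
qed

definition good :: "(real^2) set \<Rightarrow> (real^2) set \<Rightarrow> (real^2) set \<Rightarrow> bool" where
  "good X Y Z \<longleftrightarrow> convex X \<and> convex Y \<and> convex Z \<and> X \<inter> Y \<noteq> {} \<and> Y \<inter> Z \<noteq> {} \<and> X \<inter> Z \<noteq> {}"

lemma os_pt:
  assumes "convex X" "convex Y" "convex Z" "X \<inter> Y \<inter> Z = {}"
    "x \<in> Y \<inter> Z" "y \<in> X \<inter> Z" "z \<in> X \<inter> Y"
  shows "orient_set X Y Z = orient_pt x y z" "dt x y z \<noteq> 0"
proof -
  define x' where "x' = (SOME x. x \<in> Y \<inter> Z)"
  define y' where "y' = (SOME x. x \<in> X \<inter> Z)"
  define z' where "z' = (SOME x. x \<in> X \<inter> Y)"
  have m: "x' \<in> Y \<inter> Z" "y' \<in> X \<inter> Z" "z' \<in> X \<inter> Y"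
    unfolding x'_def y'_def z'_def using assms by (metis someI_ex)+
  have "orient_set X Y Z = orient_pt x' y' z'"
    unfolding orient_set_def x'_def y'_def z'_def using assms(4) by simp
  moreover have "dt x y z \<noteq> 0" by (rule dt_nz[OF assms(1-4)]) (use assms in auto)
  moreover have "dt x' y' z' \<noteq> 0" by (rule dt_nz[OF assms(1-4)]) (use m in auto)
  moreover have "dt x y z > 0 \<longleftrightarrow> dt x' y' z' > 0" by (rule dt_same[OF assms(1-4)]) (use assms m in auto)
  ultimately show "orient_set X Y Z = orient_pt x y z" "dt x y z \<noteq> 0"
    unfolding orient_pt_dt by (auto split: if_splits)
qed

lemma os_swap:
  assumes "good X Y Z" "X \<inter> Y \<inter> Z = {}"
  shows "orient_set Y X Z = - orient_set X Y Z"
proof -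
  obtain x y z where m: "x \<in> Y \<inter> Z" "y \<in> X \<inter> Z" "z \<in> X \<inter> Y" using assms unfolding good_def by blast
  have "orient_set X Y Z = orient_pt x y z" using os_pt[of X Y Z x y z] assms m unfolding good_def by auto
  moreover have "orient_set Y X Z = orient_pt y x z" by (rule os_pt(1)[of Y X Z y x z]) (use assms m in \<open>auto simp: good_def\<close>)
  ultimately show ?thesis unfolding orient_pt_dt dt_swap[of y x z] by auto
qed

lemma os_cyc:
  assumes "good X Y Z" "X \<inter> Y \<inter> Z = {}"
  shows "orient_set Y Z X = orient_set X Y Z"
proof -
  obtain x y z where m: "x \<in> Y \<inter> Z" "y \<in> X \<inter> Z" "z \<in> X \<inter> Y" using assms unfolding good_def by blast
  have "orient_set X Y Z = orient_pt x y z" using os_pt[of X Y Z x y z] assms m unfolding good_def by auto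
  moreover have "orient_set Y Z X = orient_pt y z x" by (rule os_pt(1)[of Y Z X y z x]) (use assms m in \<open>auto simp: good_def\<close>)
  ultimately show ?thesis using dt_cyc[of y z x] unfolding orient_pt_dt by auto
qed

lemma os_pm:
  assumes "good X Y Z" "X \<inter> Y \<inter> Z = {}"
  shows "orient_set X Y Z = 1 \<or> orient_set X Y Z = -1"
proof -
  obtain x y z where m: "x \<in> Y \<inter> Z" "y \<in> X \<inter> Z" "z \<in> X \<inter> Y" using assms unfolding good_def by blast
  have "orient_set X Y Z = orient_pt x y z" "dt x y z \<noteq> 0" using os_pt[of X Y Z x y z] assms m unfolding good_def by auto
  then show ?thesis unfolding orient_pt_dt by auto
qed

lemma L2:
  assumes "convex X" "convex Y" "convex Z" "convex W" "Z \<inter> W \<noteq> {}"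
    "X \<inter> Y \<inter> W \<noteq> {}" "X \<inter> Y \<inter> Z \<noteq> {}" "X \<inter> Z \<inter> W = {}" "Y \<inter> Z \<inter> W = {}"
  shows "orient_set X Z W = orient_set Y Z W"
proof -
  obtain r p t where m: "r \<in> Z \<inter> W" "p \<in> X \<inter> Y \<inter> W" "t \<in> X \<inter> Y \<inter> Z" using assms by blast
  have "orient_set X Z W = orient_pt r p t" by (rule os_pt(1)[of X Z W r p t]) (use assms m in auto)
  moreover have "orient_set Y Z W = orient_pt r p t" by (rule os_pt(1)[of Y Z W r p t]) (use assms m in auto)
  ultimately show ?thesis by simp
qed

lemma triangle:
  assumes "(dt p s t > 0 \<and> dt p t q > 0 \<and> dt p q s > 0) \<or> (dt p s t < 0 \<and> dt p t q < 0 \<and> dt p q s < 0)"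
  shows "p \<in> convex hull {q, s, t}"
proof -
  define a where "a = dt p s t"
  define b where "b = dt p t q"
  define c where "c = dt p q s"
  define S where "S = a + b + c"
  have S0: "S \<noteq> 0" using assms unfolding S_def a_def b_def c_def by linarith
  have id: "S * p$i = a * q$i + b * s$i + c * t$i" if "i = 1 \<or> i = 2" for i
    using that unfolding S_def a_def b_def c_def dt_def by (auto simp: algebra_simps)
  have "p = (a/S) *\<^sub>R q + (b/S) *\<^sub>R s + (c/S) *\<^sub>R t"
  proof -
    have "p$i = ((a/S) *\<^sub>R q + (b/S) *\<^sub>R s + (c/S) *\<^sub>R t)$i" if "i = 1 \<or> i = 2" for i
      using id[OF that] S0 by (simp add: field_simps)
    then show ?thesis by (simp add: vec_eq_iff forall_2)
  qed
  moreover have "0 \<le> a/S" "0 \<le> b/S" "0 \<le> c/S" "a/S + b/S + c/S = 1"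
    using assms S0 unfolding S_def a_def[symmetric] b_def[symmetric] c_def[symmetric]
    by (auto simp: divide_simps)
  ultimately show ?thesis unfolding convex_hull_3 by blast
qed

lemma L3:
  assumes "convex X" "convex Y" "convex Z" "convex W" "X \<inter> Y \<noteq> {}" "Y \<inter> Z \<noteq> {}" "Y \<inter> W \<noteq> {}"
    "X \<inter> Z \<inter> W \<noteq> {}" "X \<inter> Y \<inter> W = {}" "Y \<inter> Z \<inter> W = {}" "X \<inter> Y \<inter> Z = {}"
    "orient_set X Y W = orient_set Y Z W"
  shows "orient_set X Y Z = orient_set X Y W"
proof (rule ccontr)
  assume ne: "\<not> ?thesis"
  obtain p q s t where m: "p \<in> X \<inter> Z \<inter> W" "q \<in> Y \<inter> W" "s \<in> X \<inter> Y" "t \<in> Y \<inter> Z" using assms by blast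
  have o1: "orient_set X Y W = orient_pt q p s" "dt q p s \<noteq> 0" using os_pt[of X Y W q p s] assms m by auto
  have o2: "orient_set Y Z W = orient_pt p q t" "dt p q t \<noteq> 0" using os_pt[of Y Z W p q t] assms m by auto
  have o3: "orient_set X Y Z = orient_pt t p s" "dt t p s \<noteq> 0" using os_pt[of X Y Z t p s] assms m by auto
  have e: "dt p s t = dt t p s" "dt p t q = - dt p q t" "dt p q s = - dt q p s"
    using dt_cyc dt_swap by metis+
  have "(dt p s t > 0 \<and> dt p t q > 0 \<and> dt p q s > 0) \<or> (dt p s t < 0 \<and> dt p t q < 0 \<and> dt p q s < 0)"
    using o1 o2 o3 ne assms(12) unfolding e orient_pt_dt by (auto split: if_splits)
  then have "p \<in> convex hull {q, s, t}" by (rule triangle)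
  moreover have "convex hull {q, s, t} \<subseteq> Y" using m assms(2) by (intro hull_minimal) auto
  ultimately show False using m assms(9) by blast
qed


lemma os_empty: "orient_set X Y Z = 1 \<Longrightarrow> X \<inter> Y \<inter> Z = {}"
  unfolding orient_set_def by (auto split: if_splits)

lemma H:
  assumes cv: "\<forall>X\<in>{A,B,C,E,D}. convex X"
    and ne: "\<forall>X\<in>{A,B,C,E,D}. \<forall>Y\<in>{A,B,C,E,D}. X \<inter> Y \<noteq> {}"
    and q1: "B\<inter>C\<inter>E\<noteq>{} \<or> B\<inter>C\<inter>D\<noteq>{} \<or> B\<inter>E\<inter>D\<noteq>{} \<or> C\<inter>E\<inter>D\<noteq>{}"
    and q2: "A\<inter>B\<inter>E\<noteq>{} \<or> A\<inter>B\<inter>D\<noteq>{} \<or> A\<inter>E\<inter>D\<noteq>{} \<or> B\<inter>E\<inter>D\<noteq>{}"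
    and q3: "A\<inter>B\<inter>C\<noteq>{} \<or> A\<inter>B\<inter>E\<noteq>{} \<or> A\<inter>C\<inter>E\<noteq>{} \<or> B\<inter>C\<inter>E\<noteq>{}"
    and o1: "orient_set A B D = 1" and o2: "orient_set B C D = 1"
    and o3: "orient_set C E D = 1" and o4: "orient_set E A D = 1"
    and acd: "A \<inter> C \<inter> D \<noteq> {}"
  shows False
proof -
  have c: "convex A" "convex B" "convex C" "convex E" "convex D" using cv by auto
  have n: "A\<inter>B\<noteq>{}" "A\<inter>C\<noteq>{}" "A\<inter>E\<noteq>{}" "A\<inter>D\<noteq>{}" "B\<inter>C\<noteq>{}" "B\<inter>E\<noteq>{}"
    "B\<inter>D\<noteq>{}" "C\<inter>E\<noteq>{}" "C\<inter>D\<noteq>{}" "E\<inter>D\<noteq>{}" using ne by auto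
  have e: "A\<inter>B\<inter>D = {}" "B\<inter>C\<inter>D = {}" "C\<inter>E\<inter>D = {}" "E\<inter>A\<inter>D = {}"
    using o1 o2 o3 o4 os_empty by blast+
  show False
  proof (cases "A\<inter>B\<inter>C = {}")
    case False
    have "orient_set A B D = orient_set C B D" by (rule L2) (use c n acd False e in blast)+
    moreover have "orient_set C B D = - orient_set B C D"
      by (rule os_swap) ((unfold good_def)?, use c n e in blast)+
    ultimately show False using o1 o2 by simp
  next
    case abc: True
    show False
    proof (cases "A\<inter>C\<inter>E = {}")
      case False
      have "orient_set A E D = orient_set C E D" by (rule L2) (use c n acd False e in blast)+
      moreover have "orient_set A E D = - orient_set E A D"
        by (rule os_swap) ((unfold good_def)?, use c n e in blast)+
      ultimately show False using o3 o4 by simp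
    next
      case ace: True
      show False
      proof (cases "B\<inter>E\<inter>D = {}")
        case False
        then have bed: "B\<inter>E\<inter>D \<noteq> {}" .
        have "A\<inter>B\<inter>E\<noteq>{} \<or> B\<inter>C\<inter>E\<noteq>{}" using q3 abc ace by blast
        then show False
        proof
          assume abe: "A\<inter>B\<inter>E\<noteq>{}"
          have "orient_set B A D = orient_set E A D" by (rule L2) (use c n bed abe e in blast)+
          moreover have "orient_set B A D = - orient_set A B D"
            by (rule os_swap) ((unfold good_def)?, use c n e in blast)+
          ultimately show False using o1 o4 by simp
        next
          assume bce: "B\<inter>C\<inter>E\<noteq>{}"
          have "orient_set B C D = orient_set E C D" by (rule L2) (use c n bed bce e in blast)+
          moreover have "orient_set E C D = - orient_set C E D"
            by (rule os_swap) ((unfold good_def)?, use c n e in blast)+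
          ultimately show False using o2 o3 by simp
        qed
      next
        case bed: True
        have bce: "B\<inter>C\<inter>E\<noteq>{}" using q1 bed e by blast
        have abe: "A\<inter>B\<inter>E\<noteq>{}" using q2 bed e by blast
        have "orient_set A B D = orient_set B C D" using o1 o2 by simp
        then have "orient_set A B C = orient_set A B D"
          by (rule L3[rotated -1]) (use c n acd e abc in blast)+
        then have r1: "orient_set A B C = 1" using o1 by simp
        have "orient_set C E D = orient_set E A D" using o3 o4 by simp
        then have "orient_set C E A = orient_set C E D"
          by (rule L3[rotated -1]) (use c n acd e ace in blast)+
        then have r2: "orient_set C E A = 1" using o3 by simp
        have "orient_set B C A = orient_set E C A" by (rule L2) (use c n abe bce abc ace in blast)+
        moreover have "orient_set B C A = orient_set A B C"
          by (rule os_cyc) ((unfold good_def)?, use c n abc in blast)+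
        moreover have "orient_set E C A = - orient_set C E A"
          by (rule os_swap) ((unfold good_def)?, use c n ace in blast)+
        ultimately show False using r1 r2 by simp
      qed
    qed
  qed
qed

theorem claim8:
  fixes F :: "(real^2) set set" and D :: "(real^2) set"
  assumes "finite F"
    and "\<forall>X\<in>F. compact X \<and> convex X"
    and "\<forall>X\<in>F. \<forall>Y\<in>F. X \<inter> Y \<noteq> {}"
    and "\<forall>A\<in>F. \<forall>B\<in>F. \<forall>C\<in>F. \<forall>E\<in>F. distinct [A, B, C, E] \<longrightarrow>
           A \<inter> B \<inter> C \<noteq> {} \<or> A \<inter> B \<inter> E \<noteq> {} \<or> A \<inter> C \<inter> E \<noteq> {} \<or> B \<inter> C \<inter> E \<noteq> {}"
    and "D \<in> F"
  shows "\<not> (\<exists>A B C E. distinct [A, B, C, E] \<and>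
           arc_G F D A B \<and> arc_G F D B C \<and> arc_G F D C E \<and> arc_G F D E A)"
proof
  assume "\<exists>A B C E. distinct [A, B, C, E] \<and>
           arc_G F D A B \<and> arc_G F D B C \<and> arc_G F D C E \<and> arc_G F D E A"
  then obtain A B C E where d: "distinct [A, B, C, E]" and
    a: "arc_G F D A B" "arc_G F D B C" "arc_G F D C E" "arc_G F D E A" by blast
  have mem: "A \<in> F" "B \<in> F" "C \<in> F" "E \<in> F" "A \<noteq> D" "B \<noteq> D" "C \<noteq> D" "E \<noteq> D"
    using a unfolding arc_G_def by auto
  have o1: "orient_set A B D = 1" and o2: "orient_set B C D = 1"
    and o3: "orient_set C E D = 1" and o4: "orient_set E A D = 1"
    using a unfolding arc_G_def by auto
  have q: "\<And>X Y Z W. X \<in> F \<Longrightarrow> Y \<in> F \<Longrightarrow> Z \<in> F \<Longrightarrow> W \<in> F \<Longrightarrow> distinct [X, Y, Z, W] \<Longrightarrow>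
     X \<inter> Y \<inter> Z \<noteq> {} \<or> X \<inter> Y \<inter> W \<noteq> {} \<or> X \<inter> Z \<inter> W \<noteq> {} \<or> Y \<inter> Z \<inter> W \<noteq> {}"
    using assms(4) by blast
  have dd: "A \<noteq> B" "A \<noteq> C" "A \<noteq> E" "B \<noteq> C" "B \<noteq> E" "C \<noteq> E" using d by auto
  have cv: "\<forall>X\<in>{A,B,C,E,D}. convex X" using assms(2,5) mem by auto
  have ne: "\<forall>X\<in>{A,B,C,E,D}. \<forall>Y\<in>{A,B,C,E,D}. X \<inter> Y \<noteq> {}" using assms(3,5) mem by auto
  have cv2: "\<forall>X\<in>{B,C,E,A,D}. convex X" using cv by auto
  have ne2: "\<forall>X\<in>{B,C,E,A,D}. \<forall>Y\<in>{B,C,E,A,D}. X \<inter> Y \<noteq> {}" using ne by auto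
  have qBCED: "B\<inter>C\<inter>E\<noteq>{} \<or> B\<inter>C\<inter>D\<noteq>{} \<or> B\<inter>E\<inter>D\<noteq>{} \<or> C\<inter>E\<inter>D\<noteq>{}"
    by (rule q) (use mem dd assms(5) in auto)
  have qABED: "A\<inter>B\<inter>E\<noteq>{} \<or> A\<inter>B\<inter>D\<noteq>{} \<or> A\<inter>E\<inter>D\<noteq>{} \<or> B\<inter>E\<inter>D\<noteq>{}"
    by (rule q) (use mem dd assms(5) in auto)
  have qABCE: "A\<inter>B\<inter>C\<noteq>{} \<or> A\<inter>B\<inter>E\<noteq>{} \<or> A\<inter>C\<inter>E\<noteq>{} \<or> B\<inter>C\<inter>E\<noteq>{}"
    by (rule q) (use mem dd assms(5) in auto)
  have qCEAD: "C\<inter>E\<inter>A\<noteq>{} \<or> C\<inter>E\<inter>D\<noteq>{} \<or> C\<inter>A\<inter>D\<noteq>{} \<or> E\<inter>A\<inter>D\<noteq>{}"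
    by (rule q) (use mem dd assms(5) in auto)
  have qBCAD: "B\<inter>C\<inter>A\<noteq>{} \<or> B\<inter>C\<inter>D\<noteq>{} \<or> B\<inter>A\<inter>D\<noteq>{} \<or> C\<inter>A\<inter>D\<noteq>{}"
    by (rule q) (use mem dd assms(5) in auto)
  have qBCEA: "B\<inter>C\<inter>E\<noteq>{} \<or> B\<inter>C\<inter>A\<noteq>{} \<or> B\<inter>E\<inter>A\<noteq>{} \<or> C\<inter>E\<inter>A\<noteq>{}"
    by (rule q) (use mem dd assms(5) in auto)
  have qABCD: "A\<inter>B\<inter>C\<noteq>{} \<or> A\<inter>B\<inter>D\<noteq>{} \<or> A\<inter>C\<inter>D\<noteq>{} \<or> B\<inter>C\<inter>D\<noteq>{}"
    by (rule q) (use mem dd assms(5) in auto)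
  have qACED: "A\<inter>C\<inter>E\<noteq>{} \<or> A\<inter>C\<inter>D\<noteq>{} \<or> A\<inter>E\<inter>D\<noteq>{} \<or> C\<inter>E\<inter>D\<noteq>{}"
    by (rule q) (use mem dd assms(5) in auto)
  show False
  proof (cases "A \<inter> C \<inter> D = {}")
    case False
    show False by (rule H[OF cv ne qBCED qABED qABCE o1 o2 o3 o4 False])
  next
    case acd: True
    show False
    proof (cases "B \<inter> E \<inter> D = {}")
      case False
      show False by (rule H[OF cv2 ne2 qCEAD qBCAD qBCEA o2 o3 o4 o1 False])
    next
      case bed: True
      have c: "convex A" "convex B" "convex C" "convex E" "convex D" using cv by auto
      have n: "A\<inter>B\<noteq>{}" "A\<inter>C\<noteq>{}" "A\<inter>E\<noteq>{}" "A\<inter>D\<noteq>{}" "B\<inter>C\<noteq>{}" "B\<inter>E\<noteq>{}"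
        "B\<inter>D\<noteq>{}" "C\<inter>E\<noteq>{}" "C\<inter>D\<noteq>{}" "E\<inter>D\<noteq>{}" using ne by auto
      have e: "A\<inter>B\<inter>D = {}" "B\<inter>C\<inter>D = {}" "C\<inter>E\<inter>D = {}" "E\<inter>A\<inter>D = {}"
        using o1 o2 o3 o4 os_empty by blast+
      have abc: "A\<inter>B\<inter>C \<noteq> {}" using qABCD e acd by blast
      have ace: "A\<inter>C\<inter>E \<noteq> {}" using qACED e acd by blast
      have dbc: "orient_set D B C = 1"
      proof -
        have "orient_set B C D = orient_set D B C"
          by (rule os_cyc) ((unfold good_def)?, use c n e in blast)+
        then show ?thesis using o2 by simp
      qed
      have adb: "orient_set A D B = -1"
      proof -
        have "orient_set D B A = orient_set A D B"
          by (rule os_cyc) ((unfold good_def)?, use c n e in blast)+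
        moreover have "orient_set B A D = orient_set D B A"
          by (rule os_cyc) ((unfold good_def)?, use c n e in blast)+
        moreover have "orient_set B A D = - orient_set A B D"
          by (rule os_swap) ((unfold good_def)?, use c n e in blast)+
        ultimately show ?thesis using o1 by simp
      qed
      have ade: "orient_set A D E = 1"
      proof -
        have "orient_set A D E = orient_set E A D"
          by (rule os_cyc) ((unfold good_def)?, use c n e in blast)+
        then show ?thesis using o4 by simp
      qed
      have dce: "orient_set D C E = 1"
      proof -
        have "orient_set E D C = orient_set C E D"
          by (rule os_cyc) ((unfold good_def)?, use c n e in blast)+
        moreover have "orient_set D C E = orient_set E D C"
          by (rule os_cyc) ((unfold good_def)?, use c n e in blast)+
        ultimately show ?thesis using o3 by simp
      qed
      have pm: "orient_set A D C = 1 \<or> orient_set A D C = -1"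
        by (rule os_pm) ((unfold good_def)?, use c n acd in blast)+
      show False
      proof (cases "orient_set A D C = 1")
        case True
        then have "orient_set A D C = orient_set D B C" using dbc by simp
        then have "orient_set A D B = orient_set A D C"
          by (rule L3[rotated -1]) (use c n e abc acd in blast)+
        then show False using True adb by simp
      next
        case False
        then have m1: "orient_set A D C = -1" using pm by simp
        have "orient_set A D E = orient_set D C E" using ade dce by simp
        then have "orient_set A D C = orient_set A D E"
          by (rule L3[rotated -1]) (use c n e ace acd in blast)+
        then show False using m1 ade by simp
      qed
    qed
  qed
qed

end
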